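(* Let $(\mathfrak n,I,g)$ be a $\mathfrak k$-nilpotent triple with $\mathfrak k$ abelian, and $\mathsf N$ the corresponding simply-connected Lie group (with $I$ and $g$ extended to left-invariant tensor fields). Then $(\mathsf N,g)$ admits a metric connection $\nabla$ with parallel torsion and parallel curvature, whose torsion $T$ is totally skew-symmetric, and which satisfies $\nabla I=0$. Moreover, every central left-invariant vector field $U\in\mathfrak z(\mathfrak n)$ is $\nabla$-parallel, and $$g(T(X,Y),Z)=-g([X,Y],Z)-g([Y,Z],X)-g([Z,X],Y)$$ for all left-invariant vector fields $X,Y,Z\in\mathfrak n$.
   Context: $\mathfrak k$-nilpotent triple: given a compact Lie algebra $\mathfrak k$ with bi-invariant scalar product $\langle\cdot,\cdot\rangle_{\mathfrak k}$ and a finite-dimensional unitary representation $\varphi:\mathfrak k\to\mathfrak u(V,I,\langle\cdot,\cdot\rangle_V)$ without trivial submodules, it is $(\mathfrak n,I,g)$ where $\mathfrak n=\mathfrak k+V$ with only non-zero brackets $[v_1,v_2]\in\mathfrak k$ given by $\langle[v_1,v_2],K\rangle_{\mathfrak k}=\langle\varphi(K)v_1,v_2\rangle_V$ ($v_i\in V$, $K\in\mathfrak k$), $I$ is the complex structure on $V$ (the transverse complex structure, regarded as an endomorphism of $\mathfrak n$ vanishing on $\mathfrak k$), and $g=\langle\cdot,\cdot\rangle_{\mathfrak k}\oplus\langle\cdot,\cdot\rangle_V$. The centre of $\mathfrak n$ is $\mathfrak z(\mathfrak n)=\mathfrak k$. *)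

theory Defs
  imports "HOL-Analysis.Analysis"
begin

text \<open>The abelian compact Lie algebra k (with its bi-invariant scalar product) is modelled
by a Euclidean space type 'k (zero bracket; every scalar product is bi-invariant);
the unitary module (V, I, <,>_V) by a Euclidean space type 'v with an orthogonal
complex structure J; the representation by phi :: 'k => 'v => 'v.\<close>

definition knil_abelian_datum :: "('k::euclidean_space \<Rightarrow> 'v::euclidean_space \<Rightarrow> 'v) \<Rightarrow> ('v \<Rightarrow> 'v) \<Rightarrow> bool" where
  "knil_abelian_datum \<phi> J \<longleftrightarrow>
     linear J \<and> (\<forall>v. J (J v) = - v) \<and> (\<forall>v w. J v \<bullet> J w = v \<bullet> w) \<and>
     (\<forall>K. linear (\<phi> K)) \<and> (\<forall>v. linear (\<lambda>K. \<phi> K v)) \<and>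
     (\<forall>K v w. \<phi> K v \<bullet> w = - (v \<bullet> \<phi> K w)) \<and>
     (\<forall>K v. \<phi> K (J v) = J (\<phi> K v)) \<and>
     (\<forall>K L v. \<phi> K (\<phi> L v) = \<phi> L (\<phi> K v)) \<and>
     (\<forall>v. (\<forall>K. \<phi> K v = 0) \<longrightarrow> v = 0)"

text \<open>The bracket V x V -> k defined by <[v,w],K> = <phi(K) v, w>.\<close>
definition vbr :: "('k::euclidean_space \<Rightarrow> 'v::euclidean_space \<Rightarrow> 'v) \<Rightarrow> 'v \<Rightarrow> 'v \<Rightarrow> 'k" where
  "vbr \<phi> v w = (\<Sum>b\<in>Basis. (\<phi> b v \<bullet> w) *\<^sub>R b)"

text \<open>n = k + V, realised as the product type 'k \<times> 'v, whose inner product is the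
orthogonal sum g.\<close>
definition nbr :: "('k::euclidean_space \<Rightarrow> 'v::euclidean_space \<Rightarrow> 'v) \<Rightarrow> 'k \<times> 'v \<Rightarrow> 'k \<times> 'v \<Rightarrow> 'k \<times> 'v" where
  "nbr \<phi> X Y = (vbr \<phi> (snd X) (snd Y), 0)"

definition nI :: "('v \<Rightarrow> 'v) \<Rightarrow> 'k::euclidean_space \<times> 'v::euclidean_space \<Rightarrow> 'k \<times> 'v" where
  "nI J X = (0, J (snd X))"

definition centre :: "('a \<Rightarrow> 'a \<Rightarrow> 'a::real_vector) \<Rightarrow> 'a set" where
  "centre br = {U. \<forall>X. br U X = 0}"

text \<open>A left-invariant connection on the simply connected Lie group N is given by a
bilinear map L : n x n -> n, nabla_X Y = L X Y for left-invariant X, Y.\<close>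

definition torsion :: "('a \<Rightarrow> 'a \<Rightarrow> 'a) \<Rightarrow> ('a \<Rightarrow> 'a \<Rightarrow> 'a::real_vector) \<Rightarrow> 'a \<Rightarrow> 'a \<Rightarrow> 'a" where
  "torsion br L X Y = L X Y - L Y X - br X Y"

definition curvature :: "('a \<Rightarrow> 'a \<Rightarrow> 'a) \<Rightarrow> ('a \<Rightarrow> 'a \<Rightarrow> 'a::real_vector) \<Rightarrow> 'a \<Rightarrow> 'a \<Rightarrow> 'a \<Rightarrow> 'a" where
  "curvature br L X Y Z = L X (L Y Z) - L Y (L X Z) - L (br X Y) Z"

definition metric_conn :: "('a \<Rightarrow> 'a \<Rightarrow> 'a::real_inner) \<Rightarrow> bool" where
  "metric_conn L \<longleftrightarrow> (\<forall>X Y Z. L X Y \<bullet> Z + Y \<bullet> L X Z = 0)"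

definition parallel21 :: "('a \<Rightarrow> 'a \<Rightarrow> 'a::real_vector) \<Rightarrow> ('a \<Rightarrow> 'a \<Rightarrow> 'a) \<Rightarrow> bool" where
  "parallel21 L T \<longleftrightarrow> (\<forall>W X Y. L W (T X Y) - T (L W X) Y - T X (L W Y) = 0)"

definition parallel31 :: "('a \<Rightarrow> 'a \<Rightarrow> 'a::real_vector) \<Rightarrow> ('a \<Rightarrow> 'a \<Rightarrow> 'a \<Rightarrow> 'a) \<Rightarrow> bool" where
  "parallel31 L R \<longleftrightarrow> (\<forall>W X Y Z. L W (R X Y Z) - R (L W X) Y Z - R X (L W Y) Z - R X Y (L W Z) = 0)"

definition parallel11 :: "('a \<Rightarrow> 'a \<Rightarrow> 'a::real_vector) \<Rightarrow> ('a \<Rightarrow> 'a) \<Rightarrow> bool" where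
  "parallel11 L A \<longleftrightarrow> (\<forall>X Y. L X (A Y) = A (L X Y))"

definition totally_skew :: "('a \<Rightarrow> 'a \<Rightarrow> 'a::real_inner) \<Rightarrow> bool" where
  "totally_skew T \<longleftrightarrow> (\<forall>X Y Z. T X Y \<bullet> Z = - (T X Z \<bullet> Y)) \<and> (\<forall>X Y. T X Y = - T Y X)"

end

theory Submission
  imports Defs
begin

context
  fixes \<phi> :: "'k::euclidean_space \<Rightarrow> 'v::euclidean_space \<Rightarrow> 'v" and J :: "'v \<Rightarrow> 'v"
  assumes D: "knil_abelian_datum \<phi> J"
begin

lemma linJ: "linear J" using D unfolding knil_abelian_datum_def by blast
lemma linK: "linear (\<phi> K)" using D unfolding knil_abelian_datum_def by blast
lemma linV: "linear (\<lambda>K. \<phi> K v)" using D unfolding knil_abelian_datum_def by blast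
lemma skew: "\<phi> K v \<bullet> w = - (v \<bullet> \<phi> K w)" using D unfolding knil_abelian_datum_def by blast
lemma comm: "\<phi> K (\<phi> L v) = \<phi> L (\<phi> K v)" using D unfolding knil_abelian_datum_def by blast

lemma phi_simps[simp]:
  "\<phi> 0 v = 0" "\<phi> K (a + b) = \<phi> K a + \<phi> K b" "\<phi> K (a - b) = \<phi> K a - \<phi> K b"
  "\<phi> K (- a) = - \<phi> K a" "\<phi> K (c *\<^sub>R a) = c *\<^sub>R \<phi> K a"
  "\<phi> (K + M) v = \<phi> K v + \<phi> M v" "\<phi> (c *\<^sub>R K) v = c *\<^sub>R \<phi> K v" "\<phi> (- K) v = - \<phi> K v"
  using linear_neg[OF linV[of v]] linear_0[OF linV[of v]] linear_add[OF linK[of K]] linear_diff[OF linK[of K]]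
    linear_neg[OF linK[of K]] linear_scale[OF linK[of K]]
    linear_add[OF linV[of v]] linear_scale[OF linV[of v]] by auto

lemma J_neg: "J (- a) = - J a" using linear_neg[OF linJ] .

lemma vbr_inner: "vbr \<phi> v w \<bullet> K = \<phi> K v \<bullet> w"
proof -
  have "\<phi> K v = \<phi> (\<Sum>b\<in>Basis. (K \<bullet> b) *\<^sub>R b) v" by (simp add: euclidean_representation)
  also have "\<dots> = (\<Sum>b\<in>Basis. (K \<bullet> b) *\<^sub>R \<phi> b v)"
    using linear_sum[OF linV[of v], of "\<lambda>b. (K \<bullet> b) *\<^sub>R b" Basis] by simp
  finally have "\<phi> K v \<bullet> w = (\<Sum>b\<in>Basis. (K \<bullet> b) * (\<phi> b v \<bullet> w))"
    by (simp add: inner_sum_left)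
  moreover have "vbr \<phi> v w \<bullet> K = (\<Sum>b\<in>Basis. (\<phi> b v \<bullet> w) * (b \<bullet> K))"
    unfolding vbr_def by (simp add: inner_sum_left)
  ultimately show ?thesis by (simp add: inner_commute mult.commute)
qed

lemma vbr_eqI: "(\<And>K. a \<bullet> K = b \<bullet> K) \<Longrightarrow> a = (b::'k)"
  by (metis inner_diff_left inner_eq_zero_iff right_minus_eq)

lemma vbr_phi: "vbr \<phi> (\<phi> W x) y = - vbr \<phi> x (\<phi> W y)"
  by (rule vbr_eqI) (simp add: vbr_inner comm skew)

lemma vbr_neg[simp]: "vbr \<phi> (- x) y = - vbr \<phi> x y" "vbr \<phi> x (- y) = - vbr \<phi> x y"
  by (rule vbr_eqI, simp add: vbr_inner)+

lemma vbr_anti: "vbr \<phi> x y = - vbr \<phi> y x"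
proof (rule vbr_eqI)
  fix K
  have "vbr \<phi> x y \<bullet> K = - (vbr \<phi> y x \<bullet> K)"
    unfolding vbr_inner using skew[of K x y] by (simp add: inner_commute)
  then show "vbr \<phi> x y \<bullet> K = - vbr \<phi> y x \<bullet> K" by simp
qed

end

theorem proposition8p4:
  fixes \<phi> :: "'k::euclidean_space \<Rightarrow> 'v::euclidean_space \<Rightarrow> 'v" and J :: "'v \<Rightarrow> 'v"
  assumes "knil_abelian_datum \<phi> J"
  shows "\<exists>L :: 'k \<times> 'v \<Rightarrow> 'k \<times> 'v \<Rightarrow> 'k \<times> 'v.
           bilinear L \<and> metric_conn L \<and>
           parallel21 L (torsion (nbr \<phi>) L) \<and>
           parallel31 L (curvature (nbr \<phi>) L) \<and>
           totally_skew (torsion (nbr \<phi>) L) \<and>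
           parallel11 L (nI J) \<and>
           (\<forall>U \<in> centre (nbr \<phi>). \<forall>X. L X U = 0) \<and>
           (\<forall>X Y Z. torsion (nbr \<phi>) L X Y \<bullet> Z =
              - (nbr \<phi> X Y \<bullet> Z) - (nbr \<phi> Y Z \<bullet> X) - (nbr \<phi> Z X \<bullet> Y))"
proof -
  note D = assms
  define L :: "'k \<times> 'v \<Rightarrow> 'k \<times> 'v \<Rightarrow> 'k \<times> 'v" where "L = (\<lambda>X Y. (0, - \<phi> (fst X) (snd Y)))"
  have T: "torsion (nbr \<phi>) L X Y = (- vbr \<phi> (snd X) (snd Y), \<phi> (fst Y) (snd X) - \<phi> (fst X) (snd Y))" for X Y
    by (simp add: torsion_def L_def nbr_def)
  have bil: "bilinear L"
    unfolding bilinear_def L_def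
    by (auto intro!: linearI simp: phi_simps[OF D] algebra_simps)
  have met: "metric_conn L"
    unfolding metric_conn_def L_def by (simp add: skew[OF D])
  have Lx: "L X Y = (0, - \<phi> (fst X) (snd Y))" for X Y by (simp add: L_def)
  have p21: "parallel21 L (torsion (nbr \<phi>) L)"
    unfolding parallel21_def
    by (simp add: T Lx phi_simps[OF D] vbr_phi[OF D] vbr_neg[OF D] comm[OF D] zero_prod_def algebra_simps)
  have R: "curvature (nbr \<phi>) L X Y Z = (0, \<phi> (vbr \<phi> (snd X) (snd Y)) (snd Z))" for X Y Z
    by (simp add: curvature_def Lx nbr_def phi_simps[OF D] comm[OF D])
  have p31: "parallel31 L (curvature (nbr \<phi>) L)"
    unfolding parallel31_def
    by (simp add: R Lx phi_simps[OF D] vbr_phi[OF D] vbr_neg[OF D] comm[OF D] zero_prod_def algebra_simps)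
  have form: "torsion (nbr \<phi>) L X Y \<bullet> Z =
              - (nbr \<phi> X Y \<bullet> Z) - (nbr \<phi> Y Z \<bullet> X) - (nbr \<phi> Z X \<bullet> Y)" for X Y Z
  proof -
    obtain a x where X: "X = (a, x)" by (cases X)
    obtain b y where Y: "Y = (b, y)" by (cases Y)
    obtain c z where Z: "Z = (c, z)" by (cases Z)
    have 1: "torsion (nbr \<phi>) L X Y \<bullet> Z = - (vbr \<phi> x y \<bullet> c) + (\<phi> b x \<bullet> z - \<phi> a y \<bullet> z)"
      unfolding X Y Z T by (simp only: fst_conv snd_conv inner_Pair inner_minus_left inner_diff_left)
    have 2: "nbr \<phi> X Y \<bullet> Z = vbr \<phi> x y \<bullet> c"
      unfolding X Y Z nbr_def by (simp only: fst_conv snd_conv inner_Pair inner_zero_left add_0_right)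
    have 3: "nbr \<phi> Y Z \<bullet> X = \<phi> a y \<bullet> z"
      unfolding X Y Z nbr_def by (simp only: fst_conv snd_conv inner_Pair inner_zero_left add_0_right vbr_inner[OF D])
    have 4: "nbr \<phi> Z X \<bullet> Y = - (\<phi> b x \<bullet> z)"
    proof -
      have "nbr \<phi> Z X \<bullet> Y = \<phi> b z \<bullet> x"
        unfolding X Y Z nbr_def by (simp only: fst_conv snd_conv inner_Pair inner_zero_left add_0_right vbr_inner[OF D])
      also have "\<dots> = - (\<phi> b x \<bullet> z)" using skew[OF D, of b z x] by (simp only: inner_commute[of z])
      finally show ?thesis .
    qed
    show ?thesis unfolding 1 2 3 4 by simp
  qed
  have tsk: "totally_skew (torsion (nbr \<phi>) L)"
    unfolding totally_skew_def
  proof (intro conjI allI)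
    fix X Y Z :: "'k \<times> 'v"
    have a1: "nbr \<phi> Y Z \<bullet> X = - (nbr \<phi> Z Y \<bullet> X)"
      unfolding nbr_def using vbr_anti[OF D, of "snd Y" "snd Z"] by (simp add: inner_commute[of _ X] inner_Pair_0)
    have a2: "nbr \<phi> Z X \<bullet> Y = - (nbr \<phi> X Z \<bullet> Y)"
      unfolding nbr_def using vbr_anti[OF D, of "snd Z" "snd X"] by (simp add: inner_commute[of _ Y] inner_Pair_0)
    have a3: "nbr \<phi> X Y \<bullet> Z = - (nbr \<phi> Y X \<bullet> Z)"
      unfolding nbr_def using vbr_anti[OF D, of "snd X" "snd Y"] by (simp add: inner_commute[of _ Z] inner_Pair_0)
    show "torsion (nbr \<phi>) L X Y \<bullet> Z = - (torsion (nbr \<phi>) L X Z \<bullet> Y)"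
      unfolding form a1 a2 a3 by simp
  next
    fix X Y :: "'k \<times> 'v"
    show "torsion (nbr \<phi>) L X Y = - torsion (nbr \<phi>) L Y X"
      using vbr_anti[OF D, of "snd X" "snd Y"] by (simp add: T)
  qed
  have p11: "parallel11 L (nI J)"
    unfolding parallel11_def by (simp add: Lx nI_def D J_neg[OF D] comm[OF D] knil_abelian_datum_def[THEN iffD1, OF D])
  have cen: "\<forall>U \<in> centre (nbr \<phi>). \<forall>X. L X U = 0"
  proof (intro ballI allI)
    fix U X :: "'k \<times> 'v" assume "U \<in> centre (nbr \<phi>)"
    then have "vbr \<phi> (snd U) w = 0" for w :: 'v
      unfolding centre_def nbr_def by (auto simp: zero_prod_def dest!: spec[of _ "(0, w)"])
    then have "\<phi> (fst X) (snd U) \<bullet> \<phi> (fst X) (snd U) = 0"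
      using vbr_inner[OF D, of "snd U" "\<phi> (fst X) (snd U)" "fst X"] by simp
    then show "L X U = 0" by (simp add: Lx zero_prod_def)
  qed
  show ?thesis
    using bil met p21 p31 tsk p11 cen form by blast
qed

end
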